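(* Let $\tau>3$. For Lebesgue-almost every $\gamma\in(0,\tfrac12)$ the following holds. Let $\alpha\in D_{\gamma,\tau}$ with partial quotients $a_1,a_2,\dots$ and convergents $p_n/q_n$, and suppose that for infinitely many even $n$, $$\frac{p_n}{q_n}+\frac{\gamma}{q_n^{\tau+1}}>\frac{p_{n+2}}{q_{n+2}}-\frac{\gamma}{q_{n+2}^{\tau+1}}.$$ Then for every $\varepsilon>0$ (arbitrarily small) there exists $C>0$ such that $a_{n+2}\le C\,q_n^{2+\varepsilon}$ for these $n$.
   Context: For $x\in\mathbb{R}$, $\|x\|:=\min_{p\in\mathbb{Z}}|x-p|$; $\mathbb{N}=\{1,2,\dots\}$. For $\gamma>0,\tau\ge1$, $D_{\gamma,\tau}:=\{\alpha\in(0,1): \|q\alpha\|\ge\gamma/q^\tau\ \forall q\in\mathbb{N}\}$; its elements are irrational. For irrational $\alpha\in(0,1)$ write $\alpha=\cfrac{1}{a_1+\cfrac{1}{a_2+\cdots}}$ (partial quotients $a_n\in\mathbb{N}$), and let $p_n/q_n$ ($n\ge0$) be its convergents: $p_{-1}=1,q_{-1}=0,p_0=0,q_0=1$, $p_n=a_np_{n-1}+p_{n-2}$, $q_n=a_nq_{n-1}+q_{n-2}$. *)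

theory Defs
  imports "HOL-Analysis.Analysis"
begin

definition dist_int :: "real \<Rightarrow> real" where
  "dist_int x = Inf (range (\<lambda>p::int. \<bar>x - of_int p\<bar>))"

definition Dset :: "real \<Rightarrow> real \<Rightarrow> real set" where
  "Dset \<gamma> \<tau> = {\<alpha>. 0 < \<alpha> \<and> \<alpha> < 1 \<and>
      (\<forall>q::nat. q \<ge> 1 \<longrightarrow> dist_int (real q * \<alpha>) \<ge> \<gamma> / real q powr \<tau>)}"

fun cf_rem :: "real \<Rightarrow> nat \<Rightarrow> real" where
  "cf_rem \<alpha> 0 = \<alpha>"
| "cf_rem \<alpha> (Suc n) = frac (1 / cf_rem \<alpha> n)"

text \<open>Partial quotients a_n (n >= 1): a_{n+1} = floor(1/x_n).  (a_0 is irrelevant.)\<close>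
definition cf_a :: "real \<Rightarrow> nat \<Rightarrow> nat" where
  "cf_a \<alpha> n = nat \<lfloor>1 / cf_rem \<alpha> (n - 1)\<rfloor>"

text \<open>Shifted convergent sequences: cf_P alpha k = p_{k-1}, cf_Q alpha k = q_{k-1}.\<close>
fun cf_P :: "real \<Rightarrow> nat \<Rightarrow> int" where
  "cf_P \<alpha> 0 = 1"
| "cf_P \<alpha> (Suc 0) = 0"
| "cf_P \<alpha> (Suc (Suc n)) = int (cf_a \<alpha> (Suc n)) * cf_P \<alpha> (Suc n) + cf_P \<alpha> n"

fun cf_Q :: "real \<Rightarrow> nat \<Rightarrow> int" where
  "cf_Q \<alpha> 0 = 0"
| "cf_Q \<alpha> (Suc 0) = 1"
| "cf_Q \<alpha> (Suc (Suc n)) = int (cf_a \<alpha> (Suc n)) * cf_Q \<alpha> (Suc n) + cf_Q \<alpha> n"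

definition cf_p :: "real \<Rightarrow> nat \<Rightarrow> int" where "cf_p \<alpha> n = cf_P \<alpha> (Suc n)"
definition cf_q :: "real \<Rightarrow> nat \<Rightarrow> int" where "cf_q \<alpha> n = cf_Q \<alpha> (Suc n)"

end

theory Submission
  imports Defs
begin

lemma metric:
  fixes \<tau> e \<delta> :: real
  assumes tau: "\<tau> \<ge> 0" and e: "e > 0" and d: "0 < \<delta>" "\<delta> \<le> 1/2"
  shows "AE \<gamma> in lborel. \<delta> \<le> \<gamma> \<and> \<gamma> \<le> 1/2 \<longrightarrow> (\<exists>c>0. \<forall>q::nat. q \<ge> 1 \<longrightarrow>
            (\<forall>m::nat. c / real q powr (1+e) \<le> \<bar>real q powr \<tau> - \<gamma> * real m\<bar>))"
proof -
  define r where "r c q = c / real q powr (1+e)" for c :: real and q :: nat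
  define Ms where "Ms q = {m::nat. real q powr \<tau> \<le> real m \<and> real m \<le> 2 * real q powr \<tau> / \<delta>}" for q
  define I where "I c q m = {(real q powr \<tau> - r c q)/real m <..< (real q powr \<tau> + r c q)/real m}" for c q m
  define U where "U c = (\<Union>q. \<Union>m\<in>Ms (Suc q). I c (Suc q) m)" for c
  define N where "N = (\<Inter>k::nat. U (1/(real k+2)))"
  define Z where "Z = (\<Sum>q. 1 / real (Suc q) powr (1+e))"
  have qpow: "real q powr \<tau> \<ge> 1" if "q \<ge> 1" for q :: nat
    using that tau by (simp add: ge_one_powr_ge_zero)
  have MsSub: "Ms q \<subseteq> {1..nat \<lfloor>2 * real q powr \<tau> / \<delta>\<rfloor>}" if "q \<ge> 1" for q
  proof
    fix m assume "m \<in> Ms q"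
    then have h: "real q powr \<tau> \<le> real m" "real m \<le> 2 * real q powr \<tau> / \<delta>" by (auto simp: Ms_def)
    then have "m \<ge> 1" using qpow[OF that] by linarith
    moreover have "int m \<le> \<lfloor>2 * real q powr \<tau> / \<delta>\<rfloor>" using h(2)
      by (simp add: le_floor_iff)
    then have "m \<le> nat \<lfloor>2 * real q powr \<tau> / \<delta>\<rfloor>" by (metis nat_int nat_mono)
    ultimately show "m \<in> {1..nat \<lfloor>2 * real q powr \<tau> / \<delta>\<rfloor>}" by simp
  qed
  have finMs: "finite (Ms q)" if "q \<ge> 1" for q
    using MsSub[OF that] finite_subset by blast
  have cardMs: "real (card (Ms q)) \<le> 2 * real q powr \<tau> / \<delta>" if "q \<ge> 1" for q
  proof -
    have "card (Ms q) \<le> nat \<lfloor>2 * real q powr \<tau> / \<delta>\<rfloor>"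
      using card_mono[OF _ MsSub[OF that]] by simp
    moreover have "real (nat \<lfloor>2 * real q powr \<tau> / \<delta>\<rfloor>) \<le> 2 * real q powr \<tau> / \<delta>"
      using d tau by (simp add: of_nat_nat)
    ultimately show ?thesis by (meson of_nat_le_iff order_trans)
  qed
  have summ: "summable (\<lambda>q. 1 / real (Suc q) powr (1+e))"
  proof -
    have "summable (\<lambda>n. real n powr (-(1+e)))" using e by (simp add: summable_real_powr_iff)
    then have "summable (\<lambda>n. real (Suc n) powr (-(1+e)))"
      using summable_Suc_iff[where f="\<lambda>n. real n powr (-(1+e))"] by simp
    moreover have "(\<lambda>n. real (Suc n) powr (-(1+e))) = (\<lambda>q. 1 / real (Suc q) powr (1+e))"
      by (rule ext, rule powr_minus_divide)
    ultimately show ?thesis by simp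
  qed
  have Uq: "emeasure lborel (\<Union>m\<in>Ms q. I c q m) \<le> ennreal (4 * r c q / \<delta>)" if "q \<ge> 1" "c > 0" for c q
  proof -
    have rpos: "r c q \<ge> 0" using that by (simp add: r_def)
    have "emeasure lborel (\<Union>m\<in>Ms q. I c q m) \<le> (\<Sum>m\<in>Ms q. emeasure lborel (I c q m))"
      by (rule emeasure_subadditive_finite) (auto simp: finMs[OF that(1)] I_def)
    also have "\<dots> = (\<Sum>m\<in>Ms q. ennreal (2 * r c q / real m))"
    proof (rule sum.cong)
      fix m assume "m \<in> Ms q"
      have "(real q powr \<tau> - r c q)/real m \<le> (real q powr \<tau> + r c q)/real m"
        using rpos by (simp add: divide_right_mono)
      then show "emeasure lborel (I c q m) = ennreal (2 * r c q / real m)"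
        unfolding I_def by (simp add: diff_divide_distrib add_divide_distrib)
    qed simp
    also have "\<dots> = ennreal (\<Sum>m\<in>Ms q. 2 * r c q / real m)" using rpos by simp
    also have "\<dots> \<le> ennreal (4 * r c q / \<delta>)"
    proof (rule ennreal_leI)
      have "(\<Sum>m\<in>Ms q. 2 * r c q / real m) \<le> (\<Sum>m\<in>Ms q. 2 * r c q / real q powr \<tau>)"
      proof (rule sum_mono)
        fix m assume "m \<in> Ms q"
        then have "real q powr \<tau> \<le> real m" by (simp add: Ms_def)
        then show "2 * r c q / real m \<le> 2 * r c q / real q powr \<tau>"
          using qpow[OF that(1)] rpos that(1) by (intro divide_left_mono) (auto intro!: mult_pos_pos)
      qed
      also have "\<dots> = real (card (Ms q)) * (2 * r c q / real q powr \<tau>)" by simp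
      also have "\<dots> \<le> (2 * real q powr \<tau> / \<delta>) * (2 * r c q / real q powr \<tau>)"
        using cardMs[OF that(1)] rpos qpow[OF that(1)] by (intro mult_right_mono) auto
      also have "\<dots> = 4 * r c q / \<delta>" using qpow[OF that(1)] that(1) by (simp add: field_simps)
      finally show "(\<Sum>m\<in>Ms q. 2 * r c q / real m) \<le> 4 * r c q / \<delta>" .
    qed
    finally show ?thesis .
  qed
  have Ubound: "emeasure lborel (U c) \<le> ennreal (4 * c / \<delta> * Z)" if "c > 0" for c
  proof -
    have "emeasure lborel (U c) \<le> (\<Sum>q. emeasure lborel (\<Union>m\<in>Ms (Suc q). I c (Suc q) m))"
      unfolding U_def by (rule emeasure_subadditive_countably) (auto simp: I_def)
    also have "\<dots> \<le> (\<Sum>q. ennreal (4 * c / \<delta> * (1 / real (Suc q) powr (1+e))))"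
    proof (intro suminf_le)
      fix q
      have "4 * r c (Suc q) / \<delta> = 4 * c / \<delta> * (1 / real (Suc q) powr (1+e))" by (simp add: r_def)
      then show "emeasure lborel (\<Union>m\<in>Ms (Suc q). I c (Suc q) m) \<le> ennreal (4 * c / \<delta> * (1 / real (Suc q) powr (1+e)))"
        using Uq[of "Suc q" c] that by simp
    qed auto
    also have "\<dots> = ennreal (\<Sum>q. 4 * c / \<delta> * (1 / real (Suc q) powr (1+e)))"
      using that d summable_mult[OF summ, of "4 * c / \<delta>"] by (intro suminf_ennreal2) auto
    also have "\<dots> = ennreal (4 * c / \<delta> * Z)"
      unfolding Z_def by (subst suminf_mult[OF summ]) (rule refl)
    finally show ?thesis .
  qed
  have Nsets: "N \<in> sets lborel"
    unfolding N_def U_def I_def by measurable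
  have Nzero: "emeasure lborel N = 0"
  proof -
    have le: "emeasure lborel N \<le> ennreal (4 * (1/(real k+2)) / \<delta> * Z)" for k
    proof -
      have "N \<subseteq> U (1/(real k+2))" unfolding N_def by blast
      then have "emeasure lborel N \<le> emeasure lborel (U (1/(real k+2)))"
        by (intro emeasure_mono) (auto simp: U_def I_def)
      also have "\<dots> \<le> ennreal (4 * (1/(real k+2)) / \<delta> * Z)" by (rule Ubound) simp
      finally show ?thesis .
    qed
    have Zpos: "Z \<ge> 0" unfolding Z_def using summ by (intro suminf_nonneg) auto
    show ?thesis
    proof (rule ccontr)
      assume ne: "emeasure lborel N \<noteq> 0"
      have fin: "emeasure lborel N \<noteq> \<infinity>" using le_less_trans[OF le[of 0] ennreal_less_top] by simp
      define t where "t = enn2real (emeasure lborel N)"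
      have Nt: "emeasure lborel N = ennreal t" using fin by (simp add: t_def ennreal_enn2real_if)
      have "t \<ge> 0" by (simp add: t_def)
      moreover have "t \<noteq> 0" using ne Nt by auto
      ultimately have tpos: "t > 0" by linarith
      obtain k :: nat where k: "real k > 4 * Z / (\<delta> * t)" using reals_Archimedean2 by blast
      have X: "4 * (1/(real k+2)) / \<delta> * Z \<ge> 0" using Zpos d by simp
      have "t \<le> 4 * (1/(real k+2)) / \<delta> * Z" using le[of k] Nt ennreal_le_iff[OF X] by simp
      moreover have D: "\<delta> * (real k + 2) > 0" using d by simp
      moreover have "4 * (1/(real k+2)) / \<delta> * Z = 4 * Z / (\<delta> * (real k + 2))" by simp
      ultimately have "t \<le> 4 * Z / (\<delta> * (real k + 2))" by linarith
      then have "t * (\<delta> * (real k + 2)) \<le> 4 * Z" by (simp only: pos_le_divide_eq[OF D])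
      moreover have "4 * Z < real k * (\<delta> * t)" using k d tpos by (simp add: field_simps)
      moreover have "real k * (\<delta> * t) \<le> t * (\<delta> * (real k + 2))" using d tpos by (simp add: algebra_simps)
      ultimately show False by linarith
    qed
  qed
  have Nnull: "N \<in> null_sets lborel" using Nsets Nzero by auto
  show ?thesis
  proof (rule AE_I'[OF Nnull], rule subsetI)
    fix \<gamma> assume "\<gamma> \<in> {\<gamma> \<in> space lborel. \<not> (\<delta> \<le> \<gamma> \<and> \<gamma> \<le> 1/2 \<longrightarrow> (\<exists>c>0. \<forall>q::nat. q \<ge> 1 \<longrightarrow> (\<forall>m::nat. c / real q powr (1+e) \<le> \<bar>real q powr \<tau> - \<gamma> * real m\<bar>)))}"
    then have g: "\<delta> \<le> \<gamma>" "\<gamma> \<le> 1/2"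
      and bad: "\<not> (\<exists>c>0. \<forall>q::nat. q \<ge> 1 \<longrightarrow> (\<forall>m::nat. c / real q powr (1+e) \<le> \<bar>real q powr \<tau> - \<gamma> * real m\<bar>))"
      by auto
    show "\<gamma> \<in> N" unfolding N_def
    proof
      fix k :: nat
      define c where "c = 1/(real k+2)"
      have c: "c > 0" "c \<le> 1/2" by (auto simp: c_def field_simps)
      obtain q m where q: "q \<ge> 1" and qm: "\<bar>real q powr \<tau> - \<gamma> * real m\<bar> < c / real q powr (1+e)"
        using bad c by (metis not_le)
      have rle: "r c q \<le> 1/2" and rpos: "r c q \<ge> 0"
      proof -
        have "real q powr (1+e) \<ge> 1" using q e by (simp add: ge_one_powr_ge_zero)
        then have "c / real q powr (1+e) \<le> c / 1" using c q by (intro divide_left_mono) auto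
        then have "c / real q powr (1+e) \<le> c" by simp
        then show "r c q \<le> 1/2" using c unfolding r_def by linarith
        show "r c q \<ge> 0" using c by (simp add: r_def)
      qed
      have Q1: "real q powr \<tau> \<ge> 1" using qpow[OF q] .
      have lo: "\<gamma> * real m > real q powr \<tau> - r c q" and hi: "\<gamma> * real m < real q powr \<tau> + r c q"
        using qm by (auto simp: r_def)
      have gpos: "\<gamma> > 0" using g d by linarith
      have "\<gamma> * real m > 0" using lo rle Q1 by linarith
      then have mpos: "real m > 0" using gpos by (simp add: zero_less_mult_iff)
      have m1: "real q powr \<tau> \<le> real m"
      proof -
        have "real m \<ge> 2 * (\<gamma> * real m)" using g mpos by (simp add: mult_right_mono)
        then show ?thesis using lo rle Q1 by linarith
      qed
      have m2: "real m \<le> 2 * real q powr \<tau> / \<delta>"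
      proof -
        have "\<delta> * real m \<le> \<gamma> * real m" using g mpos by (simp add: mult_right_mono)
        then have "\<delta> * real m \<le> 2 * real q powr \<tau>" using hi rle Q1 by linarith
        then show ?thesis using d by (simp add: field_simps)
      qed
      have "\<gamma> \<in> I c q m" unfolding I_def using lo hi mpos by (simp add: field_simps)
      moreover have "m \<in> Ms q" using m1 m2 by (simp add: Ms_def)
      ultimately have "\<gamma> \<in> U c" unfolding U_def using q
        by (auto intro!: exI[of _ "q - 1"])
      then show "\<gamma> \<in> U (1/(real k+2))" by (simp add: c_def)
    qed
  qed
qed


lemma dist_int_le: "dist_int x \<le> \<bar>x - of_int p\<bar>"
  unfolding dist_int_def by (rule cInf_lower) (auto intro: bdd_belowI[of _ 0])

lemma Dset_irrat:
  assumes "\<alpha> \<in> Dset \<gamma> \<tau>" "\<gamma> > 0"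
  shows "\<alpha> \<notin> \<rat>"
proof
  assume "\<alpha> \<in> \<rat>"
  then obtain a b where ab: "b > 0" "\<alpha> = of_int a / of_int b" by (metis Rats_cases')
  define q where "q = nat b"
  have q1: "q \<ge> 1" using ab by (simp add: q_def)
  have rq: "real q = of_int b" using ab by (simp add: q_def)
  have "real q * \<alpha> = of_int a" using ab rq by simp
  then have "dist_int (real q * \<alpha>) \<le> 0" using dist_int_le[of "real q * \<alpha>" a] by simp
  moreover have "dist_int (real q * \<alpha>) \<ge> \<gamma> / real q powr \<tau>" using assms(1) q1 by (simp add: Dset_def)
  moreover have "\<gamma> / real q powr \<tau> > 0" using assms(2) q1 by simp
  ultimately show False by linarith
qed

lemma rem_irr:
  assumes "\<alpha> \<notin> \<rat>"
  shows "cf_rem \<alpha> n \<notin> \<rat>"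
proof (induction n)
  case 0 then show ?case using assms by simp
next
  case (Suc n)
  show ?case
  proof
    assume h: "cf_rem \<alpha> (Suc n) \<in> \<rat>"
    have "1 / cf_rem \<alpha> n = cf_rem \<alpha> (Suc n) + of_int \<lfloor>1 / cf_rem \<alpha> n\<rfloor>" by (simp add: frac_def)
    then have "1 / cf_rem \<alpha> n \<in> \<rat>" using h by simp
    then have "1 / (1 / cf_rem \<alpha> n) \<in> \<rat>" by (rule Rats_divide[OF Rats_1])
    then show False using Suc by simp
  qed
qed

lemma rem_bds:
  assumes "\<alpha> \<notin> \<rat>" "0 < \<alpha>" "\<alpha> < 1"
  shows "0 < cf_rem \<alpha> n \<and> cf_rem \<alpha> n < 1"
proof (cases n)
  case 0 then show ?thesis using assms by simp
next
  case (Suc m)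
  have "cf_rem \<alpha> n \<noteq> 0" using rem_irr[OF assms(1), of n] by auto
  moreover have "cf_rem \<alpha> n = frac (1 / cf_rem \<alpha> m)" using Suc by simp
  ultimately show ?thesis using frac_ge_0 frac_lt_1 by (metis less_eq_real_def)
qed

lemma a_pos:
  assumes "\<alpha> \<notin> \<rat>" "0 < \<alpha>" "\<alpha> < 1"
  shows "cf_a \<alpha> (Suc n) \<ge> 1"
proof -
  have b: "0 < cf_rem \<alpha> n" "cf_rem \<alpha> n < 1" using rem_bds[OF assms] by auto
  then have "1 / cf_rem \<alpha> n \<ge> 1" by simp
  then have "\<lfloor>1 / cf_rem \<alpha> n\<rfloor> \<ge> 1" by (simp add: le_floor_iff)
  then show ?thesis unfolding cf_a_def using b by (subst le_nat_iff) auto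
qed

lemma a_real:
  assumes "\<alpha> \<notin> \<rat>" "0 < \<alpha>" "\<alpha> < 1"
  shows "real (cf_a \<alpha> (Suc n)) = of_int \<lfloor>1 / cf_rem \<alpha> n\<rfloor>"
proof -
  have b: "0 < cf_rem \<alpha> n" using rem_bds[OF assms] by auto
  then have "\<lfloor>1 / cf_rem \<alpha> n\<rfloor> \<ge> 0" by simp
  then show ?thesis by (simp add: cf_a_def)
qed

lemma rem_rec:
  assumes "\<alpha> \<notin> \<rat>" "0 < \<alpha>" "\<alpha> < 1"
  shows "1 / cf_rem \<alpha> n = real (cf_a \<alpha> (Suc n)) + cf_rem \<alpha> (Suc n)"
  using a_real[OF assms, of n] by (simp add: frac_def)

lemma a_le:
  assumes "\<alpha> \<notin> \<rat>" "0 < \<alpha>" "\<alpha> < 1"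
  shows "real (cf_a \<alpha> (Suc n)) * cf_rem \<alpha> n \<le> 1"
proof -
  have b: "0 < cf_rem \<alpha> n" using rem_bds[OF assms] by auto
  have "real (cf_a \<alpha> (Suc n)) \<le> 1 / cf_rem \<alpha> n" using a_real[OF assms, of n] by simp
  then show ?thesis using b by (simp add: field_simps)
qed

lemma Q_props:
  assumes "\<alpha> \<notin> \<rat>" "0 < \<alpha>" "\<alpha> < 1"
  shows "0 \<le> cf_Q \<alpha> n \<and> 1 \<le> cf_Q \<alpha> (Suc n) \<and> cf_Q \<alpha> n \<le> cf_Q \<alpha> (Suc n)"
proof (induction n)
  case 0 then show ?case by simp
next
  case (Suc n)
  have a: "int (cf_a \<alpha> (Suc n)) \<ge> 1" using a_pos[OF assms, of n] by simp
  have h: "int (cf_a \<alpha> (Suc n)) * cf_Q \<alpha> (Suc n) \<ge> cf_Q \<alpha> (Suc n)"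
    using a Suc by (metis mult_right_mono mult_1 order_trans zero_le_one)
  have e: "cf_Q \<alpha> (Suc (Suc n)) = int (cf_a \<alpha> (Suc n)) * cf_Q \<alpha> (Suc n) + cf_Q \<alpha> n" by simp
  show ?case using e h Suc by linarith
qed

lemma det:
  "cf_P \<alpha> (Suc n) * cf_Q \<alpha> n - cf_P \<alpha> n * cf_Q \<alpha> (Suc n) = (-1) ^ Suc n"
proof (induction n)
  case 0 then show ?case by simp
next
  case (Suc n)
  then show ?case by (simp add: algebra_simps)
qed

lemma repr:
  assumes "\<alpha> \<notin> \<rat>" "0 < \<alpha>" "\<alpha> < 1"
  shows "\<alpha> * (of_int (cf_Q \<alpha> (Suc n)) + cf_rem \<alpha> n * of_int (cf_Q \<alpha> n))
       = of_int (cf_P \<alpha> (Suc n)) + cf_rem \<alpha> n * of_int (cf_P \<alpha> n)"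
proof (induction n)
  case 0 then show ?case by simp
next
  case (Suc n)
  define x where "x = cf_rem \<alpha> n"
  define x' where "x' = cf_rem \<alpha> (Suc n)"
  define a where "a = real (cf_a \<alpha> (Suc n))"
  have xpos: "x > 0" using rem_bds[OF assms] by (simp add: x_def)
  have rec: "1 / x = a + x'" using rem_rec[OF assms, of n] by (simp add: x_def x'_def a_def)
  have apos: "a + x' > 0" using rec xpos by (metis zero_less_divide_1_iff)
  have xe: "x = 1 / (a + x')" proof -
    have "x = 1 / (1 / x)" by simp
    then show ?thesis using rec by simp
  qed
  have IH: "\<alpha> * (of_int (cf_Q \<alpha> (Suc n)) + x * of_int (cf_Q \<alpha> n))
       = of_int (cf_P \<alpha> (Suc n)) + x * of_int (cf_P \<alpha> n)" using Suc by (simp add: x_def)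
  define Q0 where "Q0 = real_of_int (cf_Q \<alpha> n)"
  define Q1 where "Q1 = real_of_int (cf_Q \<alpha> (Suc n))"
  define P0 where "P0 = real_of_int (cf_P \<alpha> n)"
  define P1 where "P1 = real_of_int (cf_P \<alpha> (Suc n))"
  have xy: "x * (a + x') = 1" using xe apos by simp
  have "\<alpha> * (Q1 * (a + x') + Q0) = \<alpha> * (Q1 * (a + x') + Q0 * (x * (a + x')))" using xy by simp
  also have "\<dots> = (\<alpha> * (Q1 + x * Q0)) * (a + x')" by (simp add: algebra_simps)
  also have "\<dots> = (P1 + x * P0) * (a + x')" using IH by (simp add: Q0_def Q1_def P0_def P1_def)
  also have "\<dots> = P1 * (a + x') + P0 * (x * (a + x'))" by (simp add: algebra_simps)
  also have "\<dots> = P1 * (a + x') + P0" using xy by simp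
  finally have fin: "\<alpha> * (Q1 * (a + x') + Q0) = P1 * (a + x') + P0" .
  have e1: "real_of_int (cf_Q \<alpha> (Suc (Suc n))) = a * Q1 + Q0" by (simp add: a_def Q1_def Q0_def)
  have e2: "real_of_int (cf_P \<alpha> (Suc (Suc n))) = a * P1 + P0" by (simp add: a_def P1_def P0_def)
  show ?case unfolding e1 e2 x'_def[symmetric] Q1_def[symmetric] P1_def[symmetric]
    using fin by (simp add: algebra_simps)
qed

lemma err:
  assumes "\<alpha> \<notin> \<rat>" "0 < \<alpha>" "\<alpha> < 1"
  shows "\<bar>of_int (cf_Q \<alpha> (Suc n)) * \<alpha> - of_int (cf_P \<alpha> (Suc n))\<bar> \<le> 1 / of_int (cf_Q \<alpha> (Suc (Suc n)))"
proof -
  define x where "x = cf_rem \<alpha> n"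
  define Q0 where "Q0 = real_of_int (cf_Q \<alpha> n)"
  define Q1 where "Q1 = real_of_int (cf_Q \<alpha> (Suc n))"
  define Q2 where "Q2 = real_of_int (cf_Q \<alpha> (Suc (Suc n)))"
  define P0 where "P0 = real_of_int (cf_P \<alpha> n)"
  define P1 where "P1 = real_of_int (cf_P \<alpha> (Suc n))"
  define a where "a = real (cf_a \<alpha> (Suc n))"
  have xb: "0 < x" "x < 1" using rem_bds[OF assms] by (auto simp: x_def)
  have Qs: "0 \<le> Q0" "1 \<le> Q1" using Q_props[OF assms, of n] by (auto simp: Q0_def Q1_def)
  have Q2e: "Q2 = a * Q1 + Q0" by (simp add: Q2_def a_def Q1_def Q0_def)
  have ax: "a * x \<le> 1" using a_le[OF assms, of n] by (simp add: a_def x_def)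
  have rp: "\<alpha> * (Q1 + x * Q0) = P1 + x * P0" using repr[OF assms, of n] by (simp add: x_def Q0_def Q1_def P0_def P1_def)
  have dt: "P1 * Q0 - P0 * Q1 = (-1) ^ Suc n"
    using arg_cong[OF det[of \<alpha> n], of real_of_int] by (simp add: P0_def P1_def Q0_def Q1_def)
  define D where "D = Q1 + x * Q0"
  have Dpos: "D > 0" using Qs xb by (simp add: D_def add_pos_nonneg)
  have "(Q1 * \<alpha> - P1) * D = Q1 * (\<alpha> * D) - P1 * D" by (simp add: algebra_simps)
  also have "\<dots> = Q1 * (P1 + x * P0) - P1 * (Q1 + x * Q0)" using rp by (simp add: D_def)
  also have "\<dots> = x * (Q1 * P0 - P1 * Q0)" by (simp add: algebra_simps)
  also have "\<dots> = - x * (-1) ^ Suc n" proof -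
    have X: "Q1 * P0 - P1 * Q0 = - (P1 * Q0 - P0 * Q1)" by (simp add: algebra_simps)
    have "Q1 * P0 - P1 * Q0 = - ((-1) ^ Suc n)" by (metis X dt)
    then show ?thesis by simp
  qed
  finally have "\<bar>(Q1 * \<alpha> - P1) * D\<bar> = \<bar>- x * (-1) ^ Suc n\<bar>" by simp
  then have "\<bar>Q1 * \<alpha> - P1\<bar> * D = x" using xb Dpos by (simp add: abs_mult power_abs)
  then have E: "\<bar>Q1 * \<alpha> - P1\<bar> = x / D" using Dpos by (simp add: field_simps)
  have "1 \<le> cf_Q \<alpha> (Suc (Suc n))" using Q_props[OF assms, of "Suc n"] by blast
  then have Q2pos: "Q2 > 0" unfolding Q2_def by linarith
  have m: "(a * x) * Q1 \<le> Q1" using mult_right_mono[OF ax, of Q1] Qs by simp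
  have "x * Q2 = (a * x) * Q1 + x * Q0" by (simp add: Q2e algebra_simps)
  then have "x * Q2 \<le> D" using m by (simp add: D_def)
  then have "x / D \<le> 1 / Q2" using Dpos Q2pos by (simp add: field_simps)
  then show ?thesis using E by (simp add: Q1_def P1_def Q2_def)
qed


lemma key_ineq:
  fixes q0 q1 q2 a \<gamma> \<tau> :: real
  assumes q0: "q0 \<ge> 1" and q1: "q1 \<ge> 1" and a: "a \<ge> 0" and q2e: "q2 = a * q1 + q0"
    and tau: "\<tau> > 0" and g: "\<gamma> > 0"
    and S: "a / (q0 * q2) < \<gamma> / q0 powr (\<tau> + 1) + \<gamma> / q2 powr (\<tau> + 1)"
  shows "a * (q0 powr \<tau> - \<gamma> * q1) < 2 * \<gamma> * q0"
proof -
  have q2: "q2 \<ge> q0" using q2e a q1 by simp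
  have p0: "q0 powr \<tau> > 0" using q0 by simp
  have p2: "q2 powr \<tau> > 0" using q0 q2 by simp
  have e0: "q0 powr (\<tau>+1) = q0 powr \<tau> * q0" using q0 by (simp add: powr_add)
  have e2: "q2 powr (\<tau>+1) = q2 powr \<tau> * q2" using q0 q2 by (simp add: powr_add)
  have qq: "q0 * q2 > 0" using q0 q2 by simp
  have "q0 \<noteq> 0" "q2 \<noteq> 0" using q0 q2 by auto
  then have "a = a / (q0 * q2) * (q0 * q2)" by simp
  also have "\<dots> < (\<gamma> / q0 powr (\<tau> + 1) + \<gamma> / q2 powr (\<tau> + 1)) * (q0 * q2)"
    using S qq by (rule mult_strict_right_mono)
  also have "\<dots> = \<gamma> * q2 / q0 powr \<tau> + \<gamma> * q0 / q2 powr \<tau>"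
    unfolding e0 e2 using q0 q2 p0 p2 by (simp add: field_simps)
  also have "\<gamma> * q0 / q2 powr \<tau> \<le> \<gamma> * q0 / q0 powr \<tau>"
  proof -
    have "q0 powr \<tau> \<le> q2 powr \<tau>" using q0 q2 tau by (intro powr_mono2) auto
    then show ?thesis using p0 p2 g q0 by (intro divide_left_mono) auto
  qed
  finally have "a < \<gamma> * q2 / q0 powr \<tau> + \<gamma> * q0 / q0 powr \<tau>" by simp
  then have "a * q0 powr \<tau> < \<gamma> * q2 + \<gamma> * q0" using p0 by (simp add: field_simps)
  then show ?thesis unfolding q2e by (simp add: algebra_simps)
qed

lemma bound_n:
  fixes \<tau> \<gamma> \<alpha> c e \<epsilon> :: real
  assumes tau: "\<tau> > 3" and g: "0 < \<gamma>" "\<gamma> < 1/2" and aD: "\<alpha> \<in> Dset \<gamma> \<tau>" and c: "c > 0"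
    and e: "0 < e" "e \<le> \<epsilon>"
    and M: "\<forall>q::nat. q \<ge> 1 \<longrightarrow> (\<forall>m::nat. c / real q powr (1+e) \<le> \<bar>real q powr \<tau> - \<gamma> * real m\<bar>)"
    and n: "even n"
    and Sn: "real_of_int (cf_p \<alpha> n) / real_of_int (cf_q \<alpha> n)
              + \<gamma> / real_of_int (cf_q \<alpha> n) powr (\<tau> + 1)
            > real_of_int (cf_p \<alpha> (n + 2)) / real_of_int (cf_q \<alpha> (n + 2))
              - \<gamma> / real_of_int (cf_q \<alpha> (n + 2)) powr (\<tau> + 1)"
  shows "real (cf_a \<alpha> (n + 2)) \<le> 1 / c * real_of_int (cf_q \<alpha> n) powr (2 + \<epsilon>)"
proof -
  have irr: "\<alpha> \<notin> \<rat>" using Dset_irrat[OF aD g(1)] .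
  have a01: "0 < \<alpha>" "\<alpha> < 1" using aD by (auto simp: Dset_def)
  note A = irr a01
  define Q1 where "Q1 = cf_Q \<alpha> (Suc n)"
  define Q2 where "Q2 = cf_Q \<alpha> (Suc (Suc n))"
  define Q3 where "Q3 = cf_Q \<alpha> (Suc (Suc (Suc n)))"
  define P1 where "P1 = cf_P \<alpha> (Suc n)"
  define P2 where "P2 = cf_P \<alpha> (Suc (Suc n))"
  define P3 where "P3 = cf_P \<alpha> (Suc (Suc (Suc n)))"
  define A where "A = cf_a \<alpha> (Suc (Suc n))"
  have Q1ge: "Q1 \<ge> 1" using Q_props[OF A, of n] by (simp add: Q1_def)
  have Q2ge: "Q2 \<ge> 1" using Q_props[OF A, of "Suc n"] by (simp add: Q2_def)
  have Q3e: "Q3 = int A * Q2 + Q1" by (simp add: Q3_def Q2_def Q1_def A_def)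
  have P3e: "P3 = int A * P2 + P1" by (simp add: P3_def P2_def P1_def A_def)
  have dt: "P2 * Q1 - P1 * Q2 = 1"
    using det[of \<alpha> "Suc n"] n by (simp add: P2_def Q1_def P1_def Q2_def)
  have dt3: "P3 * Q1 - P1 * Q3 = int A"
  proof -
    have "P3 * Q1 - P1 * Q3 = int A * (P2 * Q1 - P1 * Q2)" unfolding P3e Q3e by (simp add: algebra_simps)
    then show ?thesis using dt by simp
  qed
  define q0 where "q0 = real_of_int Q1"
  define q1 where "q1 = real_of_int Q2"
  define q2 where "q2 = real_of_int Q3"
  define p0 where "p0 = real_of_int P1"
  define p2 where "p2 = real_of_int P3"
  define a where "a = real A"
  have q0ge: "q0 \<ge> 1" using Q1ge by (simp add: q0_def)
  have q1ge: "q1 \<ge> 1" using Q2ge by (simp add: q1_def)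
  have q2e: "q2 = a * q1 + q0" using Q3e by (simp add: q2_def a_def q1_def q0_def)
  have a0: "a \<ge> 0" by (simp add: a_def)
  have q2ge: "q2 \<ge> 1" using q2e a0 q1ge q0ge by (smt (verit) mult_nonneg_nonneg)
  have dtr: "p2 * q0 - p0 * q2 = a"
    using arg_cong[OF dt3, of real_of_int] by (simp add: p2_def q0_def p0_def q2_def a_def)
  have diff: "p2 / q2 - p0 / q0 = a / (q0 * q2)"
    using q0ge q2ge dtr by (simp add: field_simps)
  have Sr: "p0 / q0 + \<gamma> / q0 powr (\<tau> + 1) > p2 / q2 - \<gamma> / q2 powr (\<tau> + 1)"
    using Sn by (simp add: cf_p_def cf_q_def p0_def q0_def p2_def q2_def P1_def Q1_def P3_def Q3_def)
  have S: "a / (q0 * q2) < \<gamma> / q0 powr (\<tau> + 1) + \<gamma> / q2 powr (\<tau> + 1)"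
    using Sr diff by linarith
  have key: "a * (q0 powr \<tau> - \<gamma> * q1) < 2 * \<gamma> * q0"
    using key_ineq[OF q0ge q1ge a0 q2e _ g(1) S] tau by simp
  define qn where "qn = nat Q1"
  have qn: "real qn = q0" "qn \<ge> 1" using Q1ge by (auto simp: qn_def q0_def)
  have "\<gamma> / q0 powr \<tau> \<le> dist_int (q0 * \<alpha>)" using aD qn by (auto simp: Dset_def)
  also have "\<dots> \<le> \<bar>q0 * \<alpha> - of_int P1\<bar>" by (rule dist_int_le)
  also have "\<dots> \<le> 1 / q1" using err[OF A, of n] by (simp add: q0_def Q1_def P1_def q1_def Q2_def)
  finally have "\<gamma> / q0 powr \<tau> \<le> 1 / q1" .
  then have dio: "\<gamma> * q1 \<le> q0 powr \<tau>" using q0ge q1ge by (simp add: field_simps)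
  define mn where "mn = nat Q2"
  have mn: "real mn = q1" using Q2ge by (simp add: mn_def q1_def)
  have "c / q0 powr (1+e) \<le> \<bar>q0 powr \<tau> - \<gamma> * q1\<bar>" using M qn mn by metis
  then have X: "c / q0 powr (1+e) \<le> q0 powr \<tau> - \<gamma> * q1" using dio by simp
  have "a * (c / q0 powr (1+e)) \<le> a * (q0 powr \<tau> - \<gamma> * q1)" using X a0 by (rule mult_left_mono)
  with key have "a * (c / q0 powr (1+e)) < 2 * \<gamma> * q0" by linarith
  then have "a * c < 2 * \<gamma> * q0 * q0 powr (1+e)" using q0ge by (simp add: field_simps)
  also have "\<dots> = 2 * \<gamma> * q0 powr (2 + e)" using q0ge by (simp add: powr_add power2_eq_square)
  also have "\<dots> \<le> q0 powr (2 + e)" using g q0ge by simp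
  also have "\<dots> \<le> q0 powr (2 + \<epsilon>)" using q0ge e by (intro powr_mono) auto
  finally have "a * c \<le> q0 powr (2 + \<epsilon>)" by simp
  then have "a \<le> 1 / c * q0 powr (2 + \<epsilon>)" using c by (simp add: field_simps)
  then show ?thesis by (simp add: a_def A_def q0_def Q1_def cf_q_def)
qed

theorem lemma8:
  fixes \<tau> :: real
  assumes "\<tau> > 3"
  shows "AE \<gamma> in lborel. \<gamma> \<in> {0<..<1/2} \<longrightarrow>
    (\<forall>\<alpha> \<in> Dset \<gamma> \<tau>.
      let S = {n::nat. even n \<and>
            real_of_int (cf_p \<alpha> n) / real_of_int (cf_q \<alpha> n)
              + \<gamma> / real_of_int (cf_q \<alpha> n) powr (\<tau> + 1)
            > real_of_int (cf_p \<alpha> (n + 2)) / real_of_int (cf_q \<alpha> (n + 2))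
              - \<gamma> / real_of_int (cf_q \<alpha> (n + 2)) powr (\<tau> + 1)}
      in infinite S \<longrightarrow>
         (\<forall>\<epsilon>>0. \<exists>C>0. \<forall>n\<in>S.
            real (cf_a \<alpha> (n + 2)) \<le> C * real_of_int (cf_q \<alpha> n) powr (2 + \<epsilon>)))"
proof -
  have M: "AE \<gamma> in lborel. \<forall>j::nat. \<forall>k::nat. 1/(real j+2) \<le> \<gamma> \<and> \<gamma> \<le> 1/2 \<longrightarrow>
     (\<exists>c>0. \<forall>q::nat. q \<ge> 1 \<longrightarrow> (\<forall>m::nat. c / real q powr (1+1/(real k+1)) \<le> \<bar>real q powr \<tau> - \<gamma> * real m\<bar>))"
  proof -
    have "AE \<gamma> in lborel. 1/(real j+2) \<le> \<gamma> \<and> \<gamma> \<le> 1/2 \<longrightarrow>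
     (\<exists>c>0. \<forall>q::nat. q \<ge> 1 \<longrightarrow> (\<forall>m::nat. c / real q powr (1+1/(real k+1)) \<le> \<bar>real q powr \<tau> - \<gamma> * real m\<bar>))"
      for j k :: nat
      by (rule metric) (use assms in auto)
    then show ?thesis by (simp only: AE_all_countable) blast
  qed
  show ?thesis
    apply (rule eventually_mono[OF M])
    apply (intro impI ballI)
    apply (unfold Let_def)
    apply (intro impI allI)
    subgoal premises prems for \<gamma> \<alpha> \<epsilon>
    proof -
      note H = prems(1)
      have g: "0 < \<gamma>" "\<gamma> < 1/2" using prems(2) by auto
      have aD: "\<alpha> \<in> Dset \<gamma> \<tau>" using prems(3) .
      have eps: "\<epsilon> > 0" using prems(5) .
      obtain n0 :: nat where n0: "n0 > 0" "inverse (real n0) < \<epsilon>" using ex_inverse_of_nat_less[OF eps] by blast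
      define k where "k = n0 - 1"
      have kk: "real k + 1 = real n0" using n0 by (simp add: k_def of_nat_diff)
      define e where "e = 1 / (real k + 1)"
      have e: "0 < e" "e \<le> \<epsilon>" using n0 kk by (auto simp: e_def inverse_eq_divide)
      obtain j :: nat where j: "j > 0" "inverse (real j) < \<gamma>" using ex_inverse_of_nat_less[OF g(1)] by blast
      have "1 / (real j + 2) \<le> inverse (real j)" using j by (simp add: inverse_eq_divide frac_le)
      then have jj: "1 / (real j + 2) \<le> \<gamma>" using j by linarith
      obtain c where c: "c > 0" and Mc: "\<forall>q::nat. q \<ge> 1 \<longrightarrow> (\<forall>m::nat. c / real q powr (1+e) \<le> \<bar>real q powr \<tau> - \<gamma> * real m\<bar>)"
        using H jj g unfolding e_def by (meson less_imp_le)
      show ?thesis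
      proof (intro exI[of _ "1/c"] conjI ballI)
        show "1/c > 0" using c by simp
      next
        fix n assume "n \<in> {n::nat. even n \<and>
            real_of_int (cf_p \<alpha> n) / real_of_int (cf_q \<alpha> n)
              + \<gamma> / real_of_int (cf_q \<alpha> n) powr (\<tau> + 1)
            > real_of_int (cf_p \<alpha> (n + 2)) / real_of_int (cf_q \<alpha> (n + 2))
              - \<gamma> / real_of_int (cf_q \<alpha> (n + 2)) powr (\<tau> + 1)}"
        then have nS: "even n" "real_of_int (cf_p \<alpha> n) / real_of_int (cf_q \<alpha> n)
              + \<gamma> / real_of_int (cf_q \<alpha> n) powr (\<tau> + 1)
            > real_of_int (cf_p \<alpha> (n + 2)) / real_of_int (cf_q \<alpha> (n + 2))
              - \<gamma> / real_of_int (cf_q \<alpha> (n + 2)) powr (\<tau> + 1)" by auto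
        show "real (cf_a \<alpha> (n + 2)) \<le> 1 / c * real_of_int (cf_q \<alpha> n) powr (2 + \<epsilon>)"
          by (rule bound_n[OF assms g aD c e Mc nS])
      qed
    qed
    done
qed

end
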